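(* Let $\mathcal{M}$ be an ergodic (not necessarily reversible) Markov chain on a finite state space. Then $$\Phi(\mathcal{M})\ \ge\ \frac{\frac12-\frac{1}{2e}}{\tau(\mathcal{M},\frac{1}{2e})}.$$
   Context: A (discrete-time) Markov chain on a finite state space $\Omega$ with transition matrix $P$ is ergodic if irreducible and aperiodic; it then has a unique stationary distribution $\pi>0$. Variation distance: $\|\theta_1-\theta_2\|=\frac12\sum_i|\theta_1(i)-\theta_2(i)|$. Mixing time: $\tau_x(\mathcal{M},\varepsilon)=\min\{t>0 \text{ integer}: \|P^{t'}(x,\cdot)-\pi\|\le\varepsilon \ \forall t'\ge t\}$, $\tau(\mathcal{M},\varepsilon)=\max_x\tau_x(\mathcal{M},\varepsilon)$. Conductance: for $S\subset\Omega$ with $0<\pi(S)<1$ and $\bar S=\Omega\setminus S$, $\Phi_S(\mathcal{M})=\dfrac{\sum_{i\in S}\sum_{j\in\bar S}\pi(i)P(i,j)+\sum_{i\in\bar S}\sum_{j\in S}\pi(i)P(i,j)}{2\pi(S)\pi(\bar S)}$, and $\Phi(\mathcal{M})=\min_S\Phi_S(\mathcal{M})$ over all such $S$. *)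

theory Defs
  imports "HOL-Analysis.Analysis"
begin

definition stochastic :: "('a::finite \<Rightarrow> 'a \<Rightarrow> real) \<Rightarrow> bool" where
  "stochastic P \<longleftrightarrow> (\<forall>i j. 0 \<le> P i j) \<and> (\<forall>i. (\<Sum>j\<in>UNIV. P i j) = 1)"

fun mpow :: "('a::finite \<Rightarrow> 'a \<Rightarrow> real) \<Rightarrow> nat \<Rightarrow> 'a \<Rightarrow> 'a \<Rightarrow> real" where
  "mpow P 0 = (\<lambda>i j. if i = j then 1 else 0)"
| "mpow P (Suc t) = (\<lambda>i j. \<Sum>k\<in>UNIV. mpow P t i k * P k j)"

definition irreducible_chain :: "('a::finite \<Rightarrow> 'a \<Rightarrow> real) \<Rightarrow> bool" where
  "irreducible_chain P \<longleftrightarrow> (\<forall>i j. \<exists>t>0. mpow P t i j > 0)"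

definition aperiodic_chain :: "('a::finite \<Rightarrow> 'a \<Rightarrow> real) \<Rightarrow> bool" where
  "aperiodic_chain P \<longleftrightarrow> (\<forall>i. Gcd {t. t > 0 \<and> mpow P t i i > 0} = (1::nat))"

definition ergodic_chain :: "('a::finite \<Rightarrow> 'a \<Rightarrow> real) \<Rightarrow> bool" where
  "ergodic_chain P \<longleftrightarrow> stochastic P \<and> irreducible_chain P \<and> aperiodic_chain P"

definition stationary_dist :: "('a::finite \<Rightarrow> 'a \<Rightarrow> real) \<Rightarrow> ('a \<Rightarrow> real) \<Rightarrow> bool" where
  "stationary_dist P \<pi> \<longleftrightarrow> (\<forall>i. 0 \<le> \<pi> i) \<and> (\<Sum>i\<in>UNIV. \<pi> i) = 1 \<and>
     (\<forall>j. (\<Sum>i\<in>UNIV. \<pi> i * P i j) = \<pi> j)"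

definition var_dist :: "('a::finite \<Rightarrow> real) \<Rightarrow> ('a \<Rightarrow> real) \<Rightarrow> real" where
  "var_dist \<theta>1 \<theta>2 = (1/2) * (\<Sum>i\<in>UNIV. \<bar>\<theta>1 i - \<theta>2 i\<bar>)"

definition mixing_time_from :: "('a::finite \<Rightarrow> 'a \<Rightarrow> real) \<Rightarrow> ('a \<Rightarrow> real) \<Rightarrow> 'a \<Rightarrow> real \<Rightarrow> nat" where
  "mixing_time_from P \<pi> x \<epsilon> =
     (LEAST t. t > 0 \<and> (\<forall>t'\<ge>t. var_dist (mpow P t' x) \<pi> \<le> \<epsilon>))"

definition mixing_time :: "('a::finite \<Rightarrow> 'a \<Rightarrow> real) \<Rightarrow> ('a \<Rightarrow> real) \<Rightarrow> real \<Rightarrow> nat" where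
  "mixing_time P \<pi> \<epsilon> = Max (range (\<lambda>x. mixing_time_from P \<pi> x \<epsilon>))"

definition prob_set :: "('a::finite \<Rightarrow> real) \<Rightarrow> 'a set \<Rightarrow> real" where
  "prob_set \<pi> S = (\<Sum>i\<in>S. \<pi> i)"

definition conductance_set :: "('a::finite \<Rightarrow> 'a \<Rightarrow> real) \<Rightarrow> ('a \<Rightarrow> real) \<Rightarrow> 'a set \<Rightarrow> real" where
  "conductance_set P \<pi> S =
     ((\<Sum>i\<in>S. \<Sum>j\<in>-S. \<pi> i * P i j) + (\<Sum>i\<in>-S. \<Sum>j\<in>S. \<pi> i * P i j))
       / (2 * prob_set \<pi> S * prob_set \<pi> (-S))"

definition admissible_cut :: "('a::finite \<Rightarrow> real) \<Rightarrow> 'a set \<Rightarrow> bool" where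
  "admissible_cut \<pi> S \<longleftrightarrow> 0 < prob_set \<pi> S \<and> prob_set \<pi> S < 1"

definition conductance :: "('a::finite \<Rightarrow> 'a \<Rightarrow> real) \<Rightarrow> ('a \<Rightarrow> real) \<Rightarrow> real" where
  "conductance P \<pi> = Min (conductance_set P \<pi> ` {S. admissible_cut \<pi> S})"

end

theory Submission
  imports Defs
begin

lemma cl_mult:
  fixes S :: "nat set"
  assumes cl: "\<forall>a\<in>S. \<forall>b\<in>S. a+b\<in>S" and x: "x\<in>S"
  shows "Suc m * x \<in> S"
proof (induction m)
  case 0 then show ?case using x by simp
next
  case (Suc m)
  have "Suc (Suc m) * x = Suc m * x + x" by simp
  then show ?case using cl Suc x by metis
qed

lemma consec:
  fixes S :: "nat set"
  assumes cl: "\<forall>a\<in>S. \<forall>b\<in>S. a+b\<in>S" and g: "Gcd S = 1" and z: "0 \<notin> S"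
  shows "\<exists>b. b \<in> S \<and> b+1 \<in> S"
proof -
  have "S \<noteq> {}" using g by auto
  then obtain s where s: "s \<in> S" by blast
  define D where "D = {d. \<exists>a\<in>S. \<exists>b\<in>S. a = b + d \<and> d > 0}"
  have sp: "s > 0" using s z by (cases s) auto
  have "s + s \<in> S" using s cl by blast
  then have "s \<in> D" unfolding D_def using s sp by blast
  then have dD: "(LEAST d. d \<in> D) \<in> D" by (rule LeastI)
  define d where "d = (LEAST d. d \<in> D)"
  from dD obtain a b where ab: "a \<in> S" "b \<in> S" "a = b + d" "d > 0" unfolding D_def d_def by blast
  have dv: "d dvd t" if t: "t \<in> S" for t
  proof -
    define q where "q = t div d"
    define r where "r = t mod d"
    have tq: "t = q*d + r" unfolding q_def r_def by simp
    have X: "t + Suc q * b \<in> S" using cl t cl_mult[OF cl ab(2)] by blast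
    have Y: "q * a + b \<in> S"
    proof (cases q)
      case 0 then show ?thesis using ab by simp
    next
      case (Suc q') then show ?thesis using cl cl_mult[OF cl ab(1)] ab by blast
    qed
    have e: "t + Suc q * b = (q * a + b) + r" using tq ab(3) by (simp add: algebra_simps)
    have "r = 0"
    proof (rule ccontr)
      assume "r \<noteq> 0"
      then have "r \<in> D" unfolding D_def using X Y e by blast
      then have "d \<le> r" unfolding d_def by (rule Least_le)
      moreover have "r < d" unfolding r_def using ab(4) by simp
      ultimately show False by simp
    qed
    then show ?thesis using tq by simp
  qed
  have "d dvd Gcd S" using dv by (simp add: Gcd_greatest)
  then have "d = 1" using g by simp
  then show ?thesis using ab by auto
qed

lemma semigroup_large:
  fixes S :: "nat set"
  assumes cl: "\<forall>a\<in>S. \<forall>b\<in>S. a+b\<in>S" and g: "Gcd S = 1" and z: "0 \<notin> S"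
  shows "\<exists>N. \<forall>n\<ge>N. n \<in> S"
proof -
  obtain b where b: "b \<in> S" "b+1 \<in> S" using consec[OF assms] by blast
  have bp: "b > 0" using b z by (cases b) auto
  have "n \<in> S" if n: "n \<ge> b*b" for n
  proof -
    define k where "k = n div b"
    define r where "r = n mod b"
    have nk: "n = k*b + r" unfolding k_def r_def by simp
    have rb: "r < b" unfolding r_def using bp by simp
    have kb: "k \<ge> b"
    proof (rule ccontr)
      assume "\<not> b \<le> k"
      then have "k + 1 \<le> b" by simp
      then have "(k+1)*b \<le> b*b" by (rule mult_le_mono1)
      then show False using nk rb n by (simp add: algebra_simps)
    qed
    obtain j where j: "k = r + j" using kb rb by (metis le_Suc_ex less_imp_le order.trans)
    have e: "n = (k - r) * b + r * (b+1)" using nk j by (simp add: algebra_simps)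
    have "k - r > 0" using kb rb by simp
    then obtain m where m: "k - r = Suc m" by (cases "k - r") auto
    show ?thesis
    proof (cases r)
      case 0 then show ?thesis using e m cl_mult[OF cl b(1)] by simp
    next
      case (Suc r')
      have "(k - r) * b \<in> S" using m cl_mult[OF cl b(1)] by simp
      moreover have "r * (b+1) \<in> S" using Suc cl_mult[OF cl b(2)] by simp
      ultimately show ?thesis using e cl by metis
    qed
  qed
  then show ?thesis by blast
qed

lemma mpow_add:
  fixes P :: "'a::finite \<Rightarrow> 'a \<Rightarrow> real"
  shows "mpow P (s + t) i j = (\<Sum>k\<in>UNIV. mpow P s i k * mpow P t k j)"
proof (induction t arbitrary: j)
  case 0
  have "(\<Sum>k\<in>UNIV. mpow P s i k * mpow P 0 k j) = (\<Sum>k\<in>UNIV. if k = j then mpow P s i k else 0)"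
    by (rule sum.cong) auto
  also have "\<dots> = mpow P s i j" by simp
  finally show ?case by simp
next
  case (Suc t)
  have "mpow P (s + Suc t) i j = (\<Sum>l\<in>UNIV. mpow P (s+t) i l * P l j)" by simp
  also have "\<dots> = (\<Sum>l\<in>UNIV. (\<Sum>k\<in>UNIV. mpow P s i k * mpow P t k l) * P l j)"
    using Suc by simp
  also have "\<dots> = (\<Sum>l\<in>UNIV. \<Sum>k\<in>UNIV. mpow P s i k * (mpow P t k l * P l j))"
    by (simp add: sum_distrib_right mult.assoc)
  also have "\<dots> = (\<Sum>k\<in>UNIV. \<Sum>l\<in>UNIV. mpow P s i k * (mpow P t k l * P l j))"
    by (rule sum.swap)
  also have "\<dots> = (\<Sum>k\<in>UNIV. mpow P s i k * mpow P (Suc t) k j)"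
    by (simp add: sum_distrib_left)
  finally show ?case .
qed

lemma mpow_one:
  fixes P :: "'a::finite \<Rightarrow> 'a \<Rightarrow> real"
  shows "mpow P (Suc 0) i j = P i j"
proof -
  have "mpow P (Suc 0) i j = (\<Sum>k\<in>UNIV. (if i = k then 1 else 0) * P k j)" by simp
  also have "\<dots> = (\<Sum>k\<in>UNIV. if k = i then P k j else 0)"
    by (rule sum.cong) auto
  also have "\<dots> = P i j" by simp
  finally show ?thesis .
qed

lemma mpow_nonneg:
  fixes P :: "'a::finite \<Rightarrow> 'a \<Rightarrow> real"
  assumes "stochastic P"
  shows "0 \<le> mpow P t i j"
  using assms
  by (induction t arbitrary: j) (auto simp: stochastic_def intro!: sum_nonneg)

lemma mpow_rowsum:
  fixes P :: "'a::finite \<Rightarrow> 'a \<Rightarrow> real"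
  assumes "stochastic P"
  shows "(\<Sum>j\<in>UNIV. mpow P t i j) = 1"
proof (induction t)
  case 0 then show ?case by simp
next
  case (Suc t)
  have "(\<Sum>j\<in>UNIV. mpow P (Suc t) i j) = (\<Sum>j\<in>UNIV. \<Sum>k\<in>UNIV. mpow P t i k * P k j)" by simp
  also have "\<dots> = (\<Sum>k\<in>UNIV. \<Sum>j\<in>UNIV. mpow P t i k * P k j)" by (rule sum.swap)
  also have "\<dots> = (\<Sum>k\<in>UNIV. mpow P t i k)"
    using assms by (simp add: sum_distrib_left[symmetric] stochastic_def)
  finally show ?case using Suc by simp
qed

lemma mpow_ge:
  fixes P :: "'a::finite \<Rightarrow> 'a \<Rightarrow> real"
  assumes "stochastic P"
  shows "mpow P (s + t) i j \<ge> mpow P s i k * mpow P t k j"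
proof -
  have "mpow P s i k * mpow P t k j \<le> (\<Sum>k\<in>UNIV. mpow P s i k * mpow P t k j)"
    by (rule member_le_sum) (auto intro!: mult_nonneg_nonneg mpow_nonneg assms)
  then show ?thesis by (simp add: mpow_add)
qed

lemma mpow_stat:
  fixes P :: "'a::finite \<Rightarrow> 'a \<Rightarrow> real"
  assumes "stationary_dist P \<pi>"
  shows "(\<Sum>i\<in>UNIV. \<pi> i * mpow P t i j) = \<pi> j"
proof (induction t arbitrary: j)
  case 0
  have "(\<Sum>i\<in>UNIV. \<pi> i * mpow P 0 i j) = (\<Sum>i\<in>UNIV. if i = j then \<pi> i else 0)"
    by (rule sum.cong) auto
  then show ?case by simp
next
  case (Suc t)
  have "(\<Sum>i\<in>UNIV. \<pi> i * mpow P (Suc t) i j) = (\<Sum>i\<in>UNIV. \<Sum>k\<in>UNIV. \<pi> i * mpow P t i k * P k j)"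
    by (simp add: sum_distrib_left mult.assoc)
  also have "\<dots> = (\<Sum>k\<in>UNIV. \<Sum>i\<in>UNIV. \<pi> i * mpow P t i k * P k j)" by (rule sum.swap)
  also have "\<dots> = (\<Sum>k\<in>UNIV. \<pi> k * P k j)"
    using Suc by (simp add: sum_distrib_right[symmetric])
  also have "\<dots> = \<pi> j" using assms by (simp add: stationary_dist_def)
  finally show ?case .
qed

lemma positive_power:
  fixes P :: "'a::finite \<Rightarrow> 'a \<Rightarrow> real"
  assumes erg: "ergodic_chain P"
  shows "\<exists>N>0. \<forall>i j. mpow P N i j > 0"
proof -
  have st: "stochastic P" using erg by (simp add: ergodic_chain_def)
  have "\<exists>N0. \<forall>n\<ge>N0. n > 0 \<and> mpow P n i i > 0" for i
  proof -
    let ?S = "{t. t > 0 \<and> mpow P t i i > 0}"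
    have cl: "\<forall>a\<in>?S. \<forall>b\<in>?S. a+b\<in>?S"
    proof (intro ballI)
      fix a b assume a: "a \<in> ?S" and b: "b \<in> ?S"
      have "0 < mpow P a i i * mpow P b i i" using a b by simp
      also have "\<dots> \<le> mpow P (a + b) i i" by (rule mpow_ge[OF st])
      finally show "a + b \<in> ?S" using a by simp
    qed
    have g: "Gcd ?S = 1" using erg by (simp add: ergodic_chain_def aperiodic_chain_def)
    have "0 \<notin> ?S" by simp
    from semigroup_large[OF cl g this] show ?thesis by blast
  qed
  then obtain Nf where Nf: "\<And>i n. n \<ge> Nf i \<Longrightarrow> n > 0 \<and> mpow P n i i > 0" by metis
  have "\<exists>t>0. mpow P t i j > 0" for i j
    using erg by (simp add: ergodic_chain_def irreducible_chain_def)
  then obtain tf where tf: "\<And>i j. tf i j > 0 \<and> mpow P (tf i j) i j > 0" by metis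
  define N where "N = Suc (Max (range (\<lambda>p. Nf (fst p) + tf (fst p) (snd p))))"
  have "mpow P N i j > 0" for i j
  proof -
    have "Nf i + tf i j \<le> Max (range (\<lambda>p. Nf (fst p) + tf (fst p) (snd p)))"
      by (rule Max_ge) (auto intro: image_eqI[where x="(i,j)"])
    then have le: "Nf i + tf i j \<le> N" unfolding N_def by simp
    then have "N - tf i j \<ge> Nf i" by simp
    then have "mpow P (N - tf i j) i i > 0" using Nf by blast
    then have "0 < mpow P (N - tf i j) i i * mpow P (tf i j) i j" using tf by simp
    also have "\<dots> \<le> mpow P ((N - tf i j) + tf i j) i j" by (rule mpow_ge[OF st])
    also have "(N - tf i j) + tf i j = N" using le by simp
    finally show ?thesis .
  qed
  moreover have "N > 0" unfolding N_def by simp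
  ultimately show ?thesis by blast
qed

lemma contract:
  fixes M :: "'a::finite \<Rightarrow> 'a \<Rightarrow> real" and v :: "'a \<Rightarrow> real"
  assumes ge: "\<And>i j. \<delta> \<le> M i j" and rs: "\<And>i. (\<Sum>j\<in>UNIV. M i j) = 1"
    and v0: "(\<Sum>i\<in>UNIV. v i) = 0"
  shows "(\<Sum>j\<in>UNIV. \<bar>\<Sum>i\<in>UNIV. v i * M i j\<bar>) \<le> (1 - real CARD('a) * \<delta>) * (\<Sum>i\<in>UNIV. \<bar>v i\<bar>)"
proof -
  have e: "(\<Sum>i\<in>UNIV. v i * M i j) = (\<Sum>i\<in>UNIV. v i * (M i j - \<delta>))" for j
  proof -
    have "(\<Sum>i\<in>UNIV. v i * (M i j - \<delta>)) = (\<Sum>i\<in>UNIV. v i * M i j) - (\<Sum>i\<in>UNIV. v i) * \<delta>"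
      by (simp add: right_diff_distrib sum_subtractf sum_distrib_right)
    then show ?thesis using v0 by simp
  qed
  have b: "\<bar>\<Sum>i\<in>UNIV. v i * M i j\<bar> \<le> (\<Sum>i\<in>UNIV. \<bar>v i\<bar> * (M i j - \<delta>))" for j
  proof -
    have "\<bar>\<Sum>i\<in>UNIV. v i * M i j\<bar> \<le> (\<Sum>i\<in>UNIV. \<bar>v i * (M i j - \<delta>)\<bar>)"
      unfolding e by (rule sum_abs)
    also have "\<dots> = (\<Sum>i\<in>UNIV. \<bar>v i\<bar> * (M i j - \<delta>))"
      using ge by (intro sum.cong) (auto simp: abs_mult)
    finally show ?thesis .
  qed
  have "(\<Sum>j\<in>UNIV. \<bar>\<Sum>i\<in>UNIV. v i * M i j\<bar>) \<le> (\<Sum>j\<in>UNIV. \<Sum>i\<in>UNIV. \<bar>v i\<bar> * (M i j - \<delta>))"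
    by (rule sum_mono) (rule b)
  also have "\<dots> = (\<Sum>i\<in>UNIV. \<Sum>j\<in>UNIV. \<bar>v i\<bar> * (M i j - \<delta>))" by (rule sum.swap)
  also have "\<dots> = (\<Sum>i\<in>UNIV. \<bar>v i\<bar> * (1 - real CARD('a) * \<delta>))"
    using rs by (simp add: sum_distrib_left[symmetric] sum_subtractf)
  also have "\<dots> = (1 - real CARD('a) * \<delta>) * (\<Sum>i\<in>UNIV. \<bar>v i\<bar>)"
    by (simp add: sum_distrib_right mult.commute)
  finally show ?thesis .
qed

lemma converge:
  fixes P :: "'a::finite \<Rightarrow> 'a \<Rightarrow> real"
  assumes erg: "ergodic_chain P" and sd: "stationary_dist P \<pi>" and ep: "\<epsilon> > 0"
  shows "\<exists>T. \<forall>t\<ge>T. var_dist (mpow P t x) \<pi> \<le> \<epsilon>"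
proof -
  have st: "stochastic P" using erg by (simp add: ergodic_chain_def)
  obtain N where N: "N > 0" "\<And>i j. mpow P N i j > 0" using positive_power[OF erg] by blast
  define w where "w t j = mpow P t x j - \<pi> j" for t j
  define d where "d t = (\<Sum>j\<in>UNIV. \<bar>w t j\<bar>)" for t
  have wsum: "(\<Sum>j\<in>UNIV. w t j) = 0" for t
    using mpow_rowsum[OF st] sd by (simp add: w_def sum_subtractf stationary_dist_def)
  have wstep: "w (t + s) j = (\<Sum>i\<in>UNIV. w t i * mpow P s i j)" for t s j
    by (simp add: w_def left_diff_distrib sum_subtractf mpow_add mpow_stat[OF sd])
  define \<delta> where "\<delta> = Min (range (\<lambda>p. mpow P N (fst p) (snd p)))"
  have \<delta>le: "\<delta> \<le> mpow P N i j" for i j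
    unfolding \<delta>_def by (rule Min_le) (auto intro: image_eqI[where x="(i,j)"])
  have \<delta>pos: "\<delta> > 0" unfolding \<delta>_def using N(2) by (subst Min_gr_iff) auto
  define c where "c = 1 - real CARD('a) * \<delta>"
  have "real CARD('a) * \<delta> = (\<Sum>j\<in>(UNIV::'a set). \<delta>)" by simp
  also have "\<dots> \<le> (\<Sum>j\<in>UNIV. mpow P N undefined j)" by (rule sum_mono) (rule \<delta>le)
  also have "\<dots> = 1" by (rule mpow_rowsum[OF st])
  finally have c0: "c \<ge> 0" unfolding c_def by simp
  have c1: "c < 1" unfolding c_def using \<delta>pos by simp
  have dN: "d (t + N) \<le> c * d t" for t
    unfolding d_def c_def wstep
    by (rule contract[OF \<delta>le mpow_rowsum[OF st] wsum])
  have d1: "d (t + Suc 0) \<le> d t" for t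
    using contract[of 0 "mpow P (Suc 0)" "w t", OF mpow_nonneg[OF st] mpow_rowsum[OF st] wsum]
    unfolding d_def wstep by simp
  have dmono: "d (t + m) \<le> d t" for t m
  proof (induction m)
    case 0 then show ?case by simp
  next
    case (Suc m) then show ?case using d1[of "t + m"] by simp
  qed
  have dk: "d (k * N) \<le> c ^ k * d 0" for k
  proof (induction k)
    case 0 then show ?case by simp
  next
    case (Suc k)
    have "d (Suc k * N) = d (k * N + N)" by (simp add: add.commute)
    also have "\<dots> \<le> c * d (k * N)" by (rule dN)
    also have "\<dots> \<le> c * (c ^ k * d 0)" using Suc c0 by (rule mult_left_mono)
    finally show ?case by simp
  qed
  have d00: "d 0 \<ge> 0" unfolding d_def by simp
  have "2 * \<epsilon> / (d 0 + 1) > 0" using ep d00 by simp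
  then obtain k where k: "c ^ k < 2 * \<epsilon> / (d 0 + 1)" using real_arch_pow_inv c1 by blast
  have "c ^ k * d 0 \<le> c ^ k * (d 0 + 1)" using c0 by (intro mult_left_mono) auto
  also have "\<dots> \<le> 2 * \<epsilon> / (d 0 + 1) * (d 0 + 1)"
    using k d00 by (intro mult_right_mono) auto
  also have "\<dots> = 2 * \<epsilon>" using d00 by simp
  finally have ck: "c ^ k * d 0 \<le> 2 * \<epsilon>" .
  have "var_dist (mpow P t x) \<pi> \<le> \<epsilon>" if t: "t \<ge> k * N" for t
  proof -
    have "d t = d (k * N + (t - k * N))" using t by simp
    also have "\<dots> \<le> d (k * N)" by (rule dmono)
    also have "\<dots> \<le> 2 * \<epsilon>" using dk ck by (rule order.trans)
    finally show ?thesis unfolding var_dist_def d_def w_def by simp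
  qed
  then show ?thesis by blast
qed

lemma sum_compl:
  fixes f :: "'a::finite \<Rightarrow> real"
  shows "sum f A + sum f (-A) = sum f UNIV"
proof -
  have "UNIV = A \<union> -A" by auto
  then have "sum f UNIV = sum f (A \<union> -A)" by simp
  also have "\<dots> = sum f A + sum f (-A)" by (rule sum.union_disjoint) auto
  finally show ?thesis by simp
qed

lemma arith_final:
  fixes T a b eps Q1 Q2 :: real
  assumes "T > 0" "a > 0" "b \<ge> 1/2" "eps \<ge> 0" "Q1 \<ge> 0" "Q2 \<ge> 0" "T * Q1 \<ge> a * (b - eps)"
  shows "(Q1 + Q2) / (2 * a * b) \<ge> (1/2 - eps) / T"
proof -
  have ab: "2 * a * b > 0" using assms by simp
  have "(1/2 - eps) / T \<le> (b - eps) / (2 * b * T)"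
  proof -
    have "eps * 1 \<le> eps * (2 * b)" using assms by (intro mult_left_mono) auto
    then have "(1/2 - eps) * (2 * b) \<le> b - eps" by (simp add: algebra_simps)
    then have "(1/2 - eps) \<le> (b - eps) / (2 * b)" using assms by (simp add: pos_le_divide_eq)
    then have "(1/2 - eps) / T \<le> (b - eps) / (2 * b) / T" using assms(1) by (rule divide_right_mono[OF _ less_imp_le])
    then show ?thesis by simp
  qed
  also have "\<dots> = a * (b - eps) / T / (2 * a * b)" using assms by (simp add: field_simps)
  also have "\<dots> \<le> Q1 / (2 * a * b)"
  proof -
    have "a * (b - eps) / T \<le> Q1" using assms by (simp add: pos_divide_le_eq mult.commute)
    then show ?thesis using ab by (intro divide_right_mono) auto
  qed
  also have "\<dots> \<le> (Q1 + Q2) / (2 * a * b)" using ab assms by (simp add: divide_right_mono)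
  finally show ?thesis .
qed

lemma flow_bound:
  fixes P :: "'a::finite \<Rightarrow> 'a \<Rightarrow> real"
  assumes st: "stochastic P" and sd: "stationary_dist P \<pi>"
  shows "(\<Sum>j\<in>-A. \<Sum>x\<in>A. \<pi> x * mpow P t x j) \<le> real t * (\<Sum>i\<in>A. \<Sum>j\<in>-A. \<pi> i * P i j)"
proof -
  define \<mu> where "\<mu> t j = (\<Sum>x\<in>A. \<pi> x * mpow P t x j)" for t j
  have pin: "0 \<le> \<pi> i" for i using sd by (simp add: stationary_dist_def)
  have Pn: "0 \<le> P i j" for i j using st by (simp add: stochastic_def)
  have \<mu>n: "0 \<le> \<mu> t j" for t j unfolding \<mu>_def
    by (intro sum_nonneg mult_nonneg_nonneg pin mpow_nonneg[OF st])
  have \<mu>le: "\<mu> t j \<le> \<pi> j" for t j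
  proof -
    have "\<mu> t j \<le> (\<Sum>x\<in>UNIV. \<pi> x * mpow P t x j)" unfolding \<mu>_def
      by (rule sum_mono2) (auto intro!: mult_nonneg_nonneg pin mpow_nonneg[OF st])
    then show ?thesis using mpow_stat[OF sd] by simp
  qed
  have PA: "(\<Sum>j\<in>-A. P k j) \<le> 1" for k
  proof -
    have "(\<Sum>j\<in>-A. P k j) \<le> (\<Sum>j\<in>UNIV. P k j)" by (rule sum_mono2) (auto intro: Pn)
    then show ?thesis using st by (simp add: stochastic_def)
  qed
  have \<mu>S: "\<mu> (Suc t) j = (\<Sum>k\<in>UNIV. \<mu> t k * P k j)" for t j
  proof -
    have "\<mu> (Suc t) j = (\<Sum>x\<in>A. \<Sum>k\<in>UNIV. \<pi> x * mpow P t x k * P k j)"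
      unfolding \<mu>_def by (simp add: sum_distrib_left mult.assoc)
    also have "\<dots> = (\<Sum>k\<in>UNIV. \<Sum>x\<in>A. \<pi> x * mpow P t x k * P k j)" by (rule sum.swap)
    also have "\<dots> = (\<Sum>k\<in>UNIV. \<mu> t k * P k j)" unfolding \<mu>_def by (simp add: sum_distrib_right)
    finally show ?thesis .
  qed
  have "(\<Sum>j\<in>-A. \<mu> t j) \<le> real t * (\<Sum>i\<in>A. \<Sum>j\<in>-A. \<pi> i * P i j)"
  proof (induction t)
    case 0
    have "\<mu> 0 j = 0" if "j \<in> -A" for j unfolding \<mu>_def using that
      by (intro sum.neutral) auto
    then show ?case by simp
  next
    case (Suc t)
    have "(\<Sum>j\<in>-A. \<mu> (Suc t) j) = (\<Sum>j\<in>-A. \<Sum>k\<in>UNIV. \<mu> t k * P k j)" by (simp add: \<mu>S)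
    also have "\<dots> = (\<Sum>k\<in>UNIV. \<Sum>j\<in>-A. \<mu> t k * P k j)" by (rule sum.swap)
    also have "\<dots> = (\<Sum>k\<in>UNIV. \<mu> t k * (\<Sum>j\<in>-A. P k j))" by (simp add: sum_distrib_left)
    also have "\<dots> = (\<Sum>k\<in>A. \<mu> t k * (\<Sum>j\<in>-A. P k j)) + (\<Sum>k\<in>-A. \<mu> t k * (\<Sum>j\<in>-A. P k j))"
      by (rule sum_compl[symmetric])
    also have "\<dots> \<le> (\<Sum>k\<in>A. \<pi> k * (\<Sum>j\<in>-A. P k j)) + (\<Sum>k\<in>-A. \<mu> t k)"
    proof (rule add_mono)
      show "(\<Sum>k\<in>A. \<mu> t k * (\<Sum>j\<in>-A. P k j)) \<le> (\<Sum>k\<in>A. \<pi> k * (\<Sum>j\<in>-A. P k j))"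
        by (rule sum_mono, rule mult_right_mono, rule \<mu>le, rule sum_nonneg, rule Pn)
      show "(\<Sum>k\<in>-A. \<mu> t k * (\<Sum>j\<in>-A. P k j)) \<le> (\<Sum>k\<in>-A. \<mu> t k)"
        by (rule sum_mono) (simp add: PA \<mu>n mult_left_le)
    qed
    also have "\<dots> = (\<Sum>i\<in>A. \<Sum>j\<in>-A. \<pi> i * P i j) + (\<Sum>k\<in>-A. \<mu> t k)"
      by (simp add: sum_distrib_left)
    also have "\<dots> \<le> real (Suc t) * (\<Sum>i\<in>A. \<Sum>j\<in>-A. \<pi> i * P i j)"
      using Suc by (simp add: algebra_simps)
    finally show ?case .
  qed
  then show ?thesis unfolding \<mu>_def .
qed

lemma set_tv:
  fixes p q :: "'a::finite \<Rightarrow> real"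
  assumes "(\<Sum>j\<in>UNIV. p j) = (\<Sum>j\<in>UNIV. q j)"
  shows "\<bar>\<Sum>j\<in>B. p j - q j\<bar> \<le> var_dist p q"
proof -
  define f where "f j = p j - q j" for j
  have "(\<Sum>j\<in>B. f j) + (\<Sum>j\<in>-B. f j) = (\<Sum>j\<in>UNIV. f j)" by (rule sum_compl)
  also have "\<dots> = 0" using assms by (simp add: f_def sum_subtractf)
  finally have e: "(\<Sum>j\<in>-B. f j) = - (\<Sum>j\<in>B. f j)" by simp
  have "2 * \<bar>\<Sum>j\<in>B. f j\<bar> = \<bar>\<Sum>j\<in>B. f j\<bar> + \<bar>\<Sum>j\<in>-B. f j\<bar>" using e by simp
  also have "\<dots> \<le> (\<Sum>j\<in>B. \<bar>f j\<bar>) + (\<Sum>j\<in>-B. \<bar>f j\<bar>)" by (intro add_mono sum_abs)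
  also have "\<dots> = (\<Sum>j\<in>UNIV. \<bar>f j\<bar>)" by (rule sum_compl)
  finally show ?thesis unfolding var_dist_def f_def by simp
qed

theorem theorem17:
  fixes P :: "'a::finite \<Rightarrow> 'a \<Rightarrow> real" and \<pi> :: "'a \<Rightarrow> real"
  assumes "ergodic_chain P"
    and "stationary_dist P \<pi>"
    and "\<exists>S. admissible_cut \<pi> S"
  shows "conductance P \<pi> \<ge> (1/2 - 1/(2 * exp 1)) / real (mixing_time P \<pi> (1/(2 * exp 1)))"
proof -
  note erg = assms(1) and sd = assms(2)
  have st: "stochastic P" using erg by (simp add: ergodic_chain_def)
  define eps :: real where "eps = 1/(2 * exp 1)"
  have ep: "eps > 0" unfolding eps_def by simp
  define mt where "mt x = mixing_time_from P \<pi> x eps" for x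
  define T where "T = mixing_time P \<pi> eps"
  have mtp: "mt x > 0 \<and> (\<forall>t'\<ge>mt x. var_dist (mpow P t' x) \<pi> \<le> eps)" for x
  proof -
    obtain T0 where "\<forall>t\<ge>T0. var_dist (mpow P t x) \<pi> \<le> eps" using converge[OF erg sd ep] by blast
    then have "\<exists>t. t > 0 \<and> (\<forall>t'\<ge>t. var_dist (mpow P t' x) \<pi> \<le> eps)"
      by (intro exI[where x="Suc T0"]) auto
    then show ?thesis unfolding mt_def mixing_time_from_def by (rule LeastI_ex)
  qed
  have mtT: "mt x \<le> T" for x unfolding T_def mixing_time_def mt_def
    by (rule Max_ge) auto
  have Tpos: "T > 0" using mtp[of undefined] mtT[of undefined] by simp
  have good: "var_dist (mpow P T x) \<pi> \<le> eps" for x using mtp mtT by blast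
  have pin: "0 \<le> \<pi> i" for i using sd by (simp add: stationary_dist_def)
  have Pn: "0 \<le> P i j" for i j using st by (simp add: stochastic_def)
  have pisum: "(\<Sum>i\<in>UNIV. \<pi> i) = 1" using sd by (simp add: stationary_dist_def)
  have key: "real T * (\<Sum>i\<in>A. \<Sum>j\<in>-A. \<pi> i * P i j) \<ge> prob_set \<pi> A * (prob_set \<pi> (-A) - eps)" for A
  proof -
    have x1: "(\<Sum>j\<in>-A. mpow P T x j) \<ge> prob_set \<pi> (-A) - eps" for x
    proof -
      have "\<bar>\<Sum>j\<in>-A. mpow P T x j - \<pi> j\<bar> \<le> var_dist (mpow P T x) \<pi>"
        by (rule set_tv) (simp add: mpow_rowsum[OF st] pisum)
      then have "\<bar>\<Sum>j\<in>-A. mpow P T x j - \<pi> j\<bar> \<le> eps" using good[of x] by simp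
      then show ?thesis unfolding prob_set_def by (simp add: sum_subtractf)
    qed
    have "prob_set \<pi> A * (prob_set \<pi> (-A) - eps) = (\<Sum>x\<in>A. \<pi> x * (prob_set \<pi> (-A) - eps))"
      unfolding prob_set_def by (simp add: sum_distrib_right)
    also have "\<dots> \<le> (\<Sum>x\<in>A. \<pi> x * (\<Sum>j\<in>-A. mpow P T x j))"
      by (intro sum_mono mult_left_mono x1 pin)
    also have "\<dots> = (\<Sum>x\<in>A. \<Sum>j\<in>-A. \<pi> x * mpow P T x j)" by (simp add: sum_distrib_left)
    also have "\<dots> = (\<Sum>j\<in>-A. \<Sum>x\<in>A. \<pi> x * mpow P T x j)" by (rule sum.swap)
    also have "\<dots> \<le> real T * (\<Sum>i\<in>A. \<Sum>j\<in>-A. \<pi> i * P i j)" by (rule flow_bound[OF st sd])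
    finally show ?thesis .
  qed
  have each: "conductance_set P \<pi> S \<ge> (1/2 - eps) / real T" if adm: "admissible_cut \<pi> S" for S
  proof -
    define a where "a = prob_set \<pi> S"
    define b where "b = prob_set \<pi> (-S)"
    define Q1 where "Q1 = (\<Sum>i\<in>S. \<Sum>j\<in>-S. \<pi> i * P i j)"
    define Q2 where "Q2 = (\<Sum>i\<in>-S. \<Sum>j\<in>S. \<pi> i * P i j)"
    have ab: "a + b = 1" unfolding a_def b_def prob_set_def using sum_compl[of \<pi> S] pisum by simp
    have a0: "0 < a" "a < 1" using adm unfolding a_def admissible_cut_def by auto
    have Q1n: "Q1 \<ge> 0" unfolding Q1_def by (intro sum_nonneg mult_nonneg_nonneg pin Pn)
    have Q2n: "Q2 \<ge> 0" unfolding Q2_def by (intro sum_nonneg mult_nonneg_nonneg pin Pn)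
    have cs: "conductance_set P \<pi> S = (Q1 + Q2) / (2 * a * b)"
      unfolding conductance_set_def Q1_def Q2_def a_def b_def by simp
    have Tp: "real T > 0" using Tpos by simp
    show ?thesis
    proof (cases "b \<ge> 1/2")
      case True
      have "real T * Q1 \<ge> a * (b - eps)" unfolding Q1_def a_def b_def by (rule key)
      from arith_final[OF Tp a0(1) True less_imp_le[OF ep] Q1n Q2n this] show ?thesis
        unfolding cs .
    next
      case False
      have "real T * Q2 \<ge> b * (a - eps)" using key[of "-S"] unfolding Q2_def a_def b_def by simp
      from arith_final[OF Tp _ _ less_imp_le[OF ep] Q2n Q1n this] False ab a0
      show ?thesis unfolding cs by (simp add: mult.commute mult.left_commute add.commute)
    qed
  qed
  have fin: "finite (conductance_set P \<pi> ` {S. admissible_cut \<pi> S})" by simp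
  have ne: "conductance_set P \<pi> ` {S. admissible_cut \<pi> S} \<noteq> {}" using assms(3) by auto
  have "(1/2 - eps) / real T \<le> conductance P \<pi>"
    unfolding conductance_def using fin ne each by (subst Min_ge_iff) auto
  then show ?thesis unfolding eps_def T_def .
qed

end
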